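(* Let $n\ge3$, let $\boldsymbol\ell=(\ell_1,\ldots,\ell_n)$ be positive numbers, let $\mathbf b$ be a vector of offset Kasner exponents, and let $\mu,\tau_0\in\mathbb{R}$ with at least one of them equal to zero. Then the CMC conformal data set $(g_{\boldsymbol\ell},\mu\,\sigma_{\mathbf b,\boldsymbol\ell},\tau_0)$ on $T^n$ generates no solution of the constraint equations unless $\mu=0$ and $\tau_0=0$; in that case, for every $r>0$ it generates the data $(g_{r\boldsymbol\ell},0)$, which is the Cauchy data of a constant-$t$ slice of the static toroidal spacetime with metric $-dt^2+\sum_{k=1}^n(r\ell_k)^2(ds^k)^2$.
   Context: $q=\frac{2n}{n-2}$, $\kappa=\frac{n-1}{n}$. $T^n=(\mathbb{R}/\mathbb{Z})^n$ with unit coordinates $(s^1,\ldots,s^n)$; $g_{\boldsymbol\ell}=\sum_k\ell_k^2(ds^k)^2$, $r\boldsymbol\ell=(r\ell_1,\ldots,r\ell_n)$. Offset Kasner exponents: $\mathbf b\in\mathbb{R}^n$ with $\sum_kb_k=0$, $\sum_kb_k^2=\kappa$; $\sigma_{\mathbf b,\boldsymbol\ell}=\sum_kb_k\ell_k^2(ds^k)^2$ (transverse-traceless for $g_{\boldsymbol\ell}$). CMC conformal method: a data set $(g,\sigma,\tau_0)$ generates the solutions $\bar g=\phi^{q-2}g$, $\bar K=\phi^{-2}\sigma+\frac{\tau_0}{n}\bar g$ of the Einstein constraint equations $R_{\bar g}-|\bar K|^2+(\mathrm{tr}\bar K)^2=0$, $\mathrm{div}_{\bar g}\bar K=d\,\mathrm{tr}\bar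 K$, one for each positive solution $\phi$ of $-2\kappa q\Delta_g\phi+R_g\phi-|\sigma|_g^2\phi^{-q-1}+\kappa\tau_0^2\phi^{q-1}=0$. Cauchy data of a slice: induced metric and second fundamental form. *)

theory Defs
  imports "HOL-Analysis.Analysis"
begin

text \<open>Coordinates: the torus T^n = (R/Z)^n is represented by its universal cover
  real^'n with unit coordinates s^k; a function on T^n is a function on real^'n that is
  1-periodic in every coordinate.  n = CARD('n).  Tensor fields are given by their
  component matrices in the coordinates s^k.\<close>

definition dimn :: "'n::finite itself \<Rightarrow> real" where
  "dimn _ = real CARD('n)"

definition q_exp :: "'n::finite itself \<Rightarrow> real" where
  "q_exp N = 2 * dimn N / (dimn N - 2)"

definition kappa :: "'n::finite itself \<Rightarrow> real" where
  "kappa N = (dimn N - 1) / dimn N"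

definition torus_periodic :: "(real^'n \<Rightarrow> 'b) \<Rightarrow> bool" where
  "torus_periodic f \<longleftrightarrow> (\<forall>x k. f (x + axis k 1) = f x)"

definition partial :: "'n::finite \<Rightarrow> (real^'n \<Rightarrow> real) \<Rightarrow> real^'n \<Rightarrow> real" where
  "partial i f x = deriv (\<lambda>t. f (x + t *\<^sub>R axis i 1)) 0"

definition ginv :: "(real^'n \<Rightarrow> real^'n^'n) \<Rightarrow> real^'n \<Rightarrow> 'n::finite \<Rightarrow> 'n \<Rightarrow> real" where
  "ginv g x i j = matrix_inv (g x) $ i $ j"

definition christoffel :: "(real^'n \<Rightarrow> real^'n^'n) \<Rightarrow> 'n::finite \<Rightarrow> 'n \<Rightarrow> 'n \<Rightarrow> real^'n \<Rightarrow> real" where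
  "christoffel g k i j x = (1/2) * (\<Sum>l\<in>UNIV. ginv g x k l *
      (partial i (\<lambda>y. g y $ j $ l) x + partial j (\<lambda>y. g y $ i $ l) x
       - partial l (\<lambda>y. g y $ i $ j) x))"

text \<open>R^l_{ijk}: components of R(d_i,d_j)d_k.\<close>
definition riemann :: "(real^'n \<Rightarrow> real^'n^'n) \<Rightarrow> 'n::finite \<Rightarrow> 'n \<Rightarrow> 'n \<Rightarrow> 'n \<Rightarrow> real^'n \<Rightarrow> real" where
  "riemann g l i j k x =
     partial i (christoffel g l j k) x - partial j (christoffel g l i k) x
     + (\<Sum>p\<in>UNIV. christoffel g l i p x * christoffel g p j k x
                 - christoffel g l j p x * christoffel g p i k x)"

definition ricci :: "(real^'n \<Rightarrow> real^'n^'n) \<Rightarrow> 'n::finite \<Rightarrow> 'n \<Rightarrow> real^'n \<Rightarrow> real" where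
  "ricci g j k x = (\<Sum>i\<in>UNIV. riemann g i i j k x)"

definition scalar_curv :: "(real^'n::finite \<Rightarrow> real^'n^'n) \<Rightarrow> real^'n \<Rightarrow> real" where
  "scalar_curv g x = (\<Sum>j\<in>UNIV. \<Sum>k\<in>UNIV. ginv g x j k * ricci g j k x)"

definition laplacian :: "(real^'n::finite \<Rightarrow> real^'n^'n) \<Rightarrow> (real^'n \<Rightarrow> real) \<Rightarrow> real^'n \<Rightarrow> real" where
  "laplacian g \<phi> x = (\<Sum>i\<in>UNIV. \<Sum>j\<in>UNIV. ginv g x i j *
      (partial i (partial j \<phi>) x - (\<Sum>k\<in>UNIV. christoffel g k i j x * partial k \<phi> x)))"

definition tnorm_sq :: "(real^'n::finite \<Rightarrow> real^'n^'n) \<Rightarrow> (real^'n \<Rightarrow> real^'n^'n) \<Rightarrow> real^'n \<Rightarrow> real" where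
  "tnorm_sq g \<sigma> x = (\<Sum>i\<in>UNIV. \<Sum>j\<in>UNIV. \<Sum>k\<in>UNIV. \<Sum>l\<in>UNIV.
       ginv g x i k * ginv g x j l * \<sigma> x $ i $ j * \<sigma> x $ k $ l)"

definition g_ell :: "real^'n::finite \<Rightarrow> real^'n \<Rightarrow> real^'n^'n" where
  "g_ell l = (\<lambda>x. \<chi> i j. if i = j then (l $ i)\<^sup>2 else 0)"

definition sigma_b :: "real^'n::finite \<Rightarrow> real^'n \<Rightarrow> real^'n \<Rightarrow> real^'n^'n" where
  "sigma_b b l = (\<lambda>x. \<chi> i j. if i = j then b $ i * (l $ i)\<^sup>2 else 0)"

definition offset_kasner :: "real^'n::finite \<Rightarrow> bool" where
  "offset_kasner b \<longleftrightarrow> (\<Sum>k\<in>UNIV. b $ k) = 0 \<and> (\<Sum>k\<in>UNIV. (b $ k)\<^sup>2) = kappa TYPE('n)"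

definition torus_C2 :: "(real^'n::finite \<Rightarrow> real) \<Rightarrow> bool" where
  "torus_C2 \<phi> \<longleftrightarrow> torus_periodic \<phi> \<and> continuous_on UNIV \<phi> \<and>
     (\<forall>x i. (\<lambda>t. \<phi> (x + t *\<^sub>R axis i 1)) differentiable (at 0)) \<and>
     (\<forall>x i j. (\<lambda>t. partial j \<phi> (x + t *\<^sub>R axis i 1)) differentiable (at 0))"

definition lich_solution :: "(real^'n::finite \<Rightarrow> real^'n^'n) \<Rightarrow> (real^'n \<Rightarrow> real^'n^'n)
     \<Rightarrow> real \<Rightarrow> (real^'n \<Rightarrow> real) \<Rightarrow> bool" where
  "lich_solution g \<sigma> \<tau>0 \<phi> \<longleftrightarrow> torus_C2 \<phi> \<and> (\<forall>x. \<phi> x > 0) \<and>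
     (\<forall>x. - 2 * kappa TYPE('n) * q_exp TYPE('n) * laplacian g \<phi> x + scalar_curv g x * \<phi> x
          - tnorm_sq g \<sigma> x * \<phi> x powr (- q_exp TYPE('n) - 1)
          + kappa TYPE('n) * \<tau>0\<^sup>2 * \<phi> x powr (q_exp TYPE('n) - 1) = 0)"

definition cmc_generates :: "(real^'n::finite \<Rightarrow> real^'n^'n) \<Rightarrow> (real^'n \<Rightarrow> real^'n^'n) \<Rightarrow> real
     \<Rightarrow> (real^'n \<Rightarrow> real^'n^'n) \<Rightarrow> (real^'n \<Rightarrow> real^'n^'n) \<Rightarrow> bool" where
  "cmc_generates g \<sigma> \<tau>0 gbar Kbar \<longleftrightarrow> (\<exists>\<phi>. lich_solution g \<sigma> \<tau>0 \<phi> \<and>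
     gbar = (\<lambda>x. \<phi> x powr (q_exp TYPE('n) - 2) *\<^sub>R g x) \<and>
     Kbar = (\<lambda>x. \<phi> x powr (-2) *\<^sub>R \<sigma> x + (\<tau>0 / dimn TYPE('n)) *\<^sub>R gbar x))"

text \<open>Cauchy data (induced metric, second fundamental form) of the slice {t = t0} of a
  spacetime metric -dt^2 + h(t) (time-orthogonal form): (h(t0), (1/2) d/dt h(t0)).\<close>
definition slice_data :: "(real \<Rightarrow> real^'n::finite \<Rightarrow> real^'n^'n) \<Rightarrow> real
     \<Rightarrow> (real^'n \<Rightarrow> real^'n^'n) \<times> (real^'n \<Rightarrow> real^'n^'n)" where
  "slice_data h t0 = (h t0, (\<lambda>x. \<chi> i j. (1/2) * deriv (\<lambda>t. h t x $ i $ j) t0))"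

text \<open>Spatial part of the static toroidal spacetime -dt^2 + sum_k (r ell_k)^2 (ds^k)^2.\<close>
definition static_torus :: "real^'n::finite \<Rightarrow> real \<Rightarrow> real^'n \<Rightarrow> real^'n^'n" where
  "static_torus l t = g_ell l"

end

theory Submission imports Defs begin

lemma ifz_mult: "(if P then a else 0) * (b::real) = (if P then a*b else 0)"
  "b * (if P then a else 0) = (if P then b*a else 0)" by auto

definition dinv :: "real^'n::finite \<Rightarrow> real^'n^'n" where
  "dinv l = (\<chi> i j. if i = j then inverse ((l $ i)\<^sup>2) else 0)"

lemma ginv_g_ell:
  assumes "\<forall>k. l $ k \<noteq> (0::real)"
  shows "ginv (g_ell l) x i j = (if i = j then inverse ((l $ i)\<^sup>2) else 0)"
proof -
  have m1: "g_ell l x ** dinv l = mat 1" "dinv l ** g_ell l x = mat 1"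
    using assms by (auto simp: g_ell_def dinv_def matrix_matrix_mult_def mat_def vec_eq_iff
        ifz_mult)
  have "matrix_inv (g_ell l x) = dinv l"
    unfolding matrix_inv_def
  proof (rule some_equality)
    fix B assume "g_ell l x ** B = mat 1 \<and> B ** g_ell l x = mat 1"
    then have "B = B ** (g_ell l x ** dinv l)" "B ** g_ell l x = mat 1" using m1 by (auto simp: matrix_mul_rid)
    then show "B = dinv l" by (metis matrix_mul_assoc matrix_mul_lid)
  qed (use m1 in auto)
  then show ?thesis by (simp add: ginv_def dinv_def)
qed

lemma partial_const: "partial i (\<lambda>y. c) x = 0"
  by (simp add: partial_def)

lemma christoffel_g_ell: "christoffel (g_ell l) k i j = (\<lambda>x. 0)"
  by (rule ext) (simp add: christoffel_def g_ell_def partial_const)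

lemma scalar_curv_g_ell: "scalar_curv (g_ell l) x = 0"
  by (simp add: scalar_curv_def ricci_def riemann_def christoffel_g_ell partial_const)

lemma laplacian_g_ell:
  assumes "\<forall>k. l $ k \<noteq> (0::real)"
  shows "laplacian (g_ell l) \<phi> x = (\<Sum>i\<in>UNIV. inverse ((l $ i)\<^sup>2) * partial i (partial i \<phi>) x)"
  by (simp add: laplacian_def christoffel_g_ell ginv_g_ell[OF assms] ifz_mult)

lemma tnorm_g_ell:
  assumes "\<forall>k. l $ k \<noteq> (0::real)"
  shows "tnorm_sq (g_ell l) (\<lambda>x. \<mu> *\<^sub>R sigma_b b l x) x = \<mu>\<^sup>2 * (\<Sum>i\<in>UNIV. (b $ i)\<^sup>2)"
proof -
  let ?v = "\<lambda>i. (inverse ((l $ i)\<^sup>2))\<^sup>2 * (\<mu> * (b $ i * (l $ i)\<^sup>2))\<^sup>2"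
  have inner: "(\<Sum>k\<in>UNIV. \<Sum>m\<in>UNIV. ginv (g_ell l) x i k * ginv (g_ell l) x j m
      * (\<mu> *\<^sub>R sigma_b b l x) $ i $ j * (\<mu> *\<^sub>R sigma_b b l x) $ k $ m) = (if i = j then ?v i else 0)"
    for i j
  proof (cases "i = j")
    case True
    have "(\<Sum>k\<in>UNIV. \<Sum>m\<in>UNIV. ginv (g_ell l) x i k * ginv (g_ell l) x j m
      * (\<mu> *\<^sub>R sigma_b b l x) $ i $ j * (\<mu> *\<^sub>R sigma_b b l x) $ k $ m)
      = (\<Sum>k\<in>UNIV. if k = i then (\<Sum>m\<in>UNIV. if m = i then ?v i else 0) else 0)"
      using True by (intro sum.cong refl) (auto simp: ginv_g_ell[OF assms] sigma_b_def power2_eq_square ifz_mult)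
    also have "\<dots> = ?v i" by simp
    finally show ?thesis using True by simp
  next
    case False
    then show ?thesis by (simp add: sigma_b_def)
  qed
  have "tnorm_sq (g_ell l) (\<lambda>x. \<mu> *\<^sub>R sigma_b b l x) x
     = (\<Sum>i\<in>UNIV. ?v i)"
    unfolding tnorm_sq_def inner by simp
  also have "\<dots> = (\<Sum>i\<in>UNIV. \<mu>\<^sup>2 * (b $ i)\<^sup>2)"
    using assms by (intro sum.cong refl) (simp add: field_simps)
  finally show ?thesis by (simp add: sum_distrib_left)
qed

lemma second_deriv_max:
  fixes f f' :: "real \<Rightarrow> real"
  assumes d1: "\<And>t. (f has_real_derivative f' t) (at t)"
    and d2: "(f' has_real_derivative D) (at 0)"
    and mx: "\<And>t. f t \<le> f 0"
  shows "D \<le> 0"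
proof (rule ccontr)
  assume "\<not> D \<le> 0"
  then have D: "D > 0" by simp
  have f0: "f' 0 = 0"
    by (rule DERIV_local_max[OF d1, of 1]) (use mx in auto)
  have "((\<lambda>h. (f' (0 + h) - f' 0) / h) \<longlongrightarrow> D) (at 0)"
    using d2 by (simp add: DERIV_def)
  then have "((\<lambda>h. f' h / h) \<longlongrightarrow> D) (at 0)" using f0 by simp
  then have "\<forall>\<^sub>F h in at 0. f' h / h > 0" using D by (rule order_tendstoD(1))
  then obtain d where d: "d > 0" "\<And>h. h \<noteq> 0 \<Longrightarrow> dist h 0 < d \<Longrightarrow> f' h / h > 0"
    unfolding eventually_at by blast
  obtain z where z: "z > 0" "z < d/2" "f (d/2) - f 0 = (d/2 - 0) * f' z"
    using MVT2[of 0 "d/2" f f'] d d1 by auto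
  have "f' z / z > 0" using d(2)[of z] z by auto
  then have "f' z > 0" using z by (simp add: zero_less_divide_iff)
  then have "d/2 * f' z > 0" using d by simp
  then have "f (d/2) > f 0" using z(3) by simp
  then show False using mx[of "d/2"] by simp
qed

lemma second_deriv_min:
  fixes f f' :: "real \<Rightarrow> real"
  assumes d1: "\<And>t. (f has_real_derivative f' t) (at t)"
    and d2: "(f' has_real_derivative D) (at 0)"
    and mn: "\<And>t. f t \<ge> f 0"
  shows "D \<ge> 0"
proof -
  have "- D \<le> 0"
    by (rule second_deriv_max[of "\<lambda>t. - f t" "\<lambda>t. - f' t"])
       (use d1 d2 mn in \<open>auto intro: derivative_intros\<close>)
  then show ?thesis by simp
qed

lemma axis_derivs:
  assumes "torus_C2 \<phi>"
  shows "\<And>t. ((\<lambda>t. \<phi> (x0 + t *\<^sub>R axis i 1)) has_real_derivative partial i \<phi> (x0 + t *\<^sub>R axis i 1)) (at t)"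
    and "((\<lambda>t. partial i \<phi> (x0 + t *\<^sub>R axis i 1)) has_real_derivative partial i (partial i \<phi>) x0) (at 0)"
proof -
  fix t
  let ?y = "x0 + t *\<^sub>R axis i 1"
  let ?g = "\<lambda>s. \<phi> (?y + s *\<^sub>R axis i 1)"
  have "?g differentiable at 0" using assms by (simp add: torus_C2_def)
  then have "(?g has_real_derivative partial i \<phi> ?y) (at (t + - t))"
    by (simp add: partial_def DERIV_deriv_iff_real_differentiable)
  then have "((\<lambda>s. ?g (s + - t)) has_real_derivative partial i \<phi> ?y) (at t)"
    by (simp only: DERIV_shift)
  moreover have "(\<lambda>s. ?g (s + - t)) = (\<lambda>t. \<phi> (x0 + t *\<^sub>R axis i 1))"
    by (rule ext) (simp add: algebra_simps)
  ultimately show "((\<lambda>t. \<phi> (x0 + t *\<^sub>R axis i 1)) has_real_derivative partial i \<phi> (x0 + t *\<^sub>R axis i 1)) (at t)"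
    by simp
next
  have "(\<lambda>t. partial i \<phi> (x0 + t *\<^sub>R axis i 1)) differentiable at 0"
    using assms by (simp add: torus_C2_def)
  then show "((\<lambda>t. partial i \<phi> (x0 + t *\<^sub>R axis i 1)) has_real_derivative partial i (partial i \<phi>) x0) (at 0)"
    by (simp add: DERIV_deriv_iff_real_differentiable partial_def[of i "partial i \<phi>"])
qed

lemma periodic_nat:
  assumes "torus_periodic f"
  shows "f (x + real m *\<^sub>R axis k 1) = f x"
proof (induction m)
  case (Suc m)
  have "f (x + real (Suc m) *\<^sub>R axis k 1) = f ((x + real m *\<^sub>R axis k 1) + axis k 1)"
    by (simp add: algebra_simps)
  also have "\<dots> = f (x + real m *\<^sub>R axis k 1)" using assms by (simp add: torus_periodic_def)
  finally show ?case using Suc by simp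
qed simp

lemma periodic_int:
  assumes "torus_periodic f"
  shows "f (x + of_int m *\<^sub>R axis k 1) = f x"
proof (cases "m \<ge> 0")
  case True
  then have "of_int m = real (nat m)" by simp
  then show ?thesis using periodic_nat[OF assms, of x "nat m" k] by (simp only:)
next
  case False
  then have m: "of_int m = - real (nat (-m))" by simp
  have "f ((x + of_int m *\<^sub>R axis k 1) + real (nat (-m)) *\<^sub>R axis k 1) = f (x + of_int m *\<^sub>R axis k 1)"
    by (rule periodic_nat[OF assms])
  moreover have "(x + of_int m *\<^sub>R axis k 1) + real (nat (-m)) *\<^sub>R axis k 1
      = x + (of_int m + real (nat (-m))) *\<^sub>R axis k 1" by (simp only: scaleR_left_distrib add.assoc)
  moreover have "of_int m + real (nat (-m)) = 0" using m by linarith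
  ultimately show ?thesis by (simp only: scaleR_zero_left add_0_right)
qed

lemma periodic_sum:
  assumes "torus_periodic f" "finite S"
  shows "f (x + (\<Sum>k\<in>S. of_int (c k) *\<^sub>R axis k 1)) = f x"
  using assms(2)
proof (induction S arbitrary: x rule: finite_induct)
  case (insert a S)
  have "f (x + (\<Sum>k\<in>insert a S. of_int (c k) *\<^sub>R axis k 1))
     = f ((x + (\<Sum>k\<in>S. of_int (c k) *\<^sub>R axis k 1)) + of_int (c a) *\<^sub>R axis a 1)"
    using insert by (simp add: algebra_simps)
  also have "\<dots> = f x" using periodic_int[OF assms(1)] insert by simp
  finally show ?case .
qed simp

lemma periodic_frac:
  assumes "torus_periodic (f :: real^'n::finite \<Rightarrow> 'b)"
  shows "f x = f (\<chi> k. frac (x $ k))"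
proof -
  have "x = (\<chi> k. frac (x $ k)) + (\<Sum>k\<in>UNIV. of_int \<lfloor>x $ k\<rfloor> *\<^sub>R axis k 1)"
    by (simp add: vec_eq_iff frac_def axis_def sum_component if_distrib cong: if_cong)
  then show ?thesis using periodic_sum[OF assms, of UNIV "\<chi> k. frac (x $ k)" "\<lambda>k. \<lfloor>x $ k\<rfloor>"]
    by simp
qed

lemma periodic_extrema:
  assumes "torus_periodic (f :: real^'n::finite \<Rightarrow> real)" "continuous_on UNIV f"
  shows "\<exists>x0. \<forall>y. f y \<le> f x0" "\<exists>x0. \<forall>y. f y \<ge> f x0"
proof -
  let ?C = "cbox (0::real^'n) 1"
  have "0 \<in> ?C" by (simp add: mem_box_cart)
  then have C: "compact ?C" "?C \<noteq> {}" by auto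
  have cont: "continuous_on ?C f" using assms(2) continuous_on_subset by blast
  have fr: "(\<chi> k. frac (x $ k)) \<in> ?C" for x :: "real^'n"
    by (auto simp: mem_box_cart frac_ge_0 less_imp_le[OF frac_lt_1])
  obtain x0 where "x0 \<in> ?C" "\<forall>y\<in>?C. f y \<le> f x0"
    using continuous_attains_sup[OF C cont] by blast
  then show "\<exists>x0. \<forall>y. f y \<le> f x0" using fr periodic_frac[OF assms(1)] by metis
  obtain x1 where "x1 \<in> ?C" "\<forall>y\<in>?C. f y \<ge> f x1"
    using continuous_attains_inf[OF C cont] by blast
  then show "\<exists>x0. \<forall>y. f y \<ge> f x0" using fr periodic_frac[OF assms(1)] by metis
qed

lemma lap_extreme:
  assumes "torus_C2 \<phi>" "\<forall>k. l $ k \<noteq> (0::real)"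
  shows "\<exists>x. laplacian (g_ell l) \<phi> x \<le> 0" "\<exists>x. laplacian (g_ell l) \<phi> x \<ge> 0"
proof -
  have per: "torus_periodic \<phi>" "continuous_on UNIV \<phi>" using assms(1) by (auto simp: torus_C2_def)
  obtain x0 where x0: "\<forall>y. \<phi> y \<le> \<phi> x0" using periodic_extrema(1)[OF per] by blast
  have "partial i (partial i \<phi>) x0 \<le> 0" for i
    by (rule second_deriv_max[OF axis_derivs[OF assms(1)]]) (use x0 in simp)
  then have "laplacian (g_ell l) \<phi> x0 \<le> 0"
    unfolding laplacian_g_ell[OF assms(2)]
    by (intro sum_nonpos) (simp add: mult_nonneg_nonpos)
  then show "\<exists>x. laplacian (g_ell l) \<phi> x \<le> 0" by blast
  obtain x1 where x1: "\<forall>y. \<phi> y \<ge> \<phi> x1" using periodic_extrema(2)[OF per] by blast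
  have "partial i (partial i \<phi>) x1 \<ge> 0" for i
    by (rule second_deriv_min[OF axis_derivs[OF assms(1)]]) (use x1 in simp)
  then have "laplacian (g_ell l) \<phi> x1 \<ge> 0"
    unfolding laplacian_g_ell[OF assms(2)]
    by (intro sum_nonneg) simp
  then show "\<exists>x. laplacian (g_ell l) \<phi> x \<ge> 0" by blast
qed

lemma partial_const_fun: "partial i (\<lambda>y. c) = (\<lambda>y. 0)"
  by (rule ext) (simp add: partial_def)

theorem proposition4p2:
  fixes l b :: "real^'n::finite" and \<mu> \<tau>0 :: real
  assumes "CARD('n) \<ge> 3"
    and "\<forall>k. l $ k > 0"
    and "offset_kasner b"
    and "\<mu> = 0 \<or> \<tau>0 = 0"
  shows "((\<exists>gbar Kbar. cmc_generates (g_ell l) (\<lambda>x. \<mu> *\<^sub>R sigma_b b l x) \<tau>0 gbar Kbar)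
           \<longrightarrow> \<mu> = 0 \<and> \<tau>0 = 0)
       \<and> (\<mu> = 0 \<and> \<tau>0 = 0 \<longrightarrow>
           (\<forall>r > 0. cmc_generates (g_ell l) (\<lambda>x. \<mu> *\<^sub>R sigma_b b l x) \<tau>0
                        (g_ell (r *\<^sub>R l)) (\<lambda>x. 0)
                    \<and> (\<forall>t0. slice_data (static_torus (r *\<^sub>R l)) t0 = (g_ell (r *\<^sub>R l), (\<lambda>x. 0)))))"
proof -
  have l0: "\<forall>k. l $ k \<noteq> 0" using assms(2) by (metis less_irrefl)
  define N where "N = dimn TYPE('n)"
  have N3: "N \<ge> 3" using assms(1) by (simp add: N_def dimn_def)
  have kap: "kappa TYPE('n) > 0" using N3 by (simp add: kappa_def N_def[symmetric])
  have q: "q_exp TYPE('n) > 0" using N3 by (simp add: q_exp_def N_def[symmetric])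
  have bsum: "(\<Sum>i\<in>UNIV. (b $ i)\<^sup>2) = kappa TYPE('n)" using assms(3) by (simp add: offset_kasner_def)
  have part1: "\<mu> = 0 \<and> \<tau>0 = 0" if gen: "cmc_generates (g_ell l) (\<lambda>x. \<mu> *\<^sub>R sigma_b b l x) \<tau>0 gbar Kbar" for gbar Kbar
  proof -
    obtain \<phi> where ls: "lich_solution (g_ell l) (\<lambda>x. \<mu> *\<^sub>R sigma_b b l x) \<tau>0 \<phi>"
      using gen by (auto simp: cmc_generates_def)
    have C2: "torus_C2 \<phi>" and pos: "\<And>x. \<phi> x > 0" using ls by (auto simp: lich_solution_def)
    have eq: "- 2 * kappa TYPE('n) * q_exp TYPE('n) * laplacian (g_ell l) \<phi> x
          - \<mu>\<^sup>2 * kappa TYPE('n) * \<phi> x powr (- q_exp TYPE('n) - 1)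
          + kappa TYPE('n) * \<tau>0\<^sup>2 * \<phi> x powr (q_exp TYPE('n) - 1) = 0" for x
      using ls by (simp add: lich_solution_def scalar_curv_g_ell tnorm_g_ell[OF l0] bsum)
    have kq: "kappa TYPE('n) * q_exp TYPE('n) > 0" using kap q by simp
    show ?thesis
    proof (rule ccontr)
      assume nz: "\<not> (\<mu> = 0 \<and> \<tau>0 = 0)"
      show False
      proof (cases "\<mu> = 0")
        case True
        then have t: "\<tau>0 \<noteq> 0" using nz by simp
        obtain x where x: "laplacian (g_ell l) \<phi> x \<le> 0" using lap_extreme(1)[OF C2 l0] by blast
        have p: "kappa TYPE('n) * \<tau>0\<^sup>2 * \<phi> x powr (q_exp TYPE('n) - 1) > 0"
          using kap t pos[of x] by simp
        have "kappa TYPE('n) * q_exp TYPE('n) * laplacian (g_ell l) \<phi> x \<le> 0"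
          using kq x by (simp add: mult_nonneg_nonpos)
        moreover have "- 2 * kappa TYPE('n) * q_exp TYPE('n) * laplacian (g_ell l) \<phi> x
           = - 2 * (kappa TYPE('n) * q_exp TYPE('n) * laplacian (g_ell l) \<phi> x)" by simp
        moreover have "\<mu>\<^sup>2 * kappa TYPE('n) * \<phi> x powr (- q_exp TYPE('n) - 1) = 0" using True by simp
        ultimately show False using eq[of x] p by linarith
      next
        case False
        then have t: "\<tau>0 = 0" using assms(4) by simp
        obtain x where x: "laplacian (g_ell l) \<phi> x \<ge> 0" using lap_extreme(2)[OF C2 l0] by blast
        have p: "\<mu>\<^sup>2 * kappa TYPE('n) * \<phi> x powr (- q_exp TYPE('n) - 1) > 0"
          using kap False pos[of x] by simp
        have "kappa TYPE('n) * q_exp TYPE('n) * laplacian (g_ell l) \<phi> x \<ge> 0"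
          using kq x by simp
        moreover have "- 2 * kappa TYPE('n) * q_exp TYPE('n) * laplacian (g_ell l) \<phi> x
           = - 2 * (kappa TYPE('n) * q_exp TYPE('n) * laplacian (g_ell l) \<phi> x)" by simp
        moreover have "kappa TYPE('n) * \<tau>0\<^sup>2 * \<phi> x powr (q_exp TYPE('n) - 1) = 0" using t by simp
        ultimately show False using eq[of x] p by linarith
      qed
    qed
  qed
  have part2: "cmc_generates (g_ell l) (\<lambda>x. \<mu> *\<^sub>R sigma_b b l x) \<tau>0 (g_ell (r *\<^sub>R l)) (\<lambda>x. 0)
        \<and> (\<forall>t0. slice_data (static_torus (r *\<^sub>R l)) t0 = (g_ell (r *\<^sub>R l), (\<lambda>x. 0)))"
    if z: "\<mu> = 0" "\<tau>0 = 0" and r: "r > 0" for r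
  proof
    define c where "c = r powr ((N - 2) / 2)"
    have cpos: "c > 0" using r by (simp add: c_def)
    have C2: "torus_C2 (\<lambda>x::real^'n. c)"
      by (simp add: torus_C2_def torus_periodic_def partial_const_fun)
    have ls: "lich_solution (g_ell l) (\<lambda>x. \<mu> *\<^sub>R sigma_b b l x) \<tau>0 (\<lambda>x. c)"
      using C2 cpos z by (simp add: lich_solution_def laplacian_g_ell[OF l0] partial_const_fun
          scalar_curv_g_ell tnorm_sq_def)
    have qm2: "q_exp TYPE('n) - 2 = 4 / (N - 2)" using N3
      by (simp add: q_exp_def N_def[symmetric] field_simps)
    have "c powr (q_exp TYPE('n) - 2) = r powr ((N - 2) / 2 * (4 / (N - 2)))"
      by (simp add: c_def qm2 powr_powr)
    also have "(N - 2) / 2 * (4 / (N - 2)) = 2" using N3 by (simp add: field_simps)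
    finally have c2: "c powr (q_exp TYPE('n) - 2) = r\<^sup>2" using r by (simp add: powr_numeral)
    have gb: "(\<lambda>x. c powr (q_exp TYPE('n) - 2) *\<^sub>R g_ell l x) = g_ell (r *\<^sub>R l)"
      by (rule ext) (simp add: c2 g_ell_def vec_eq_iff power_mult_distrib)
    show "cmc_generates (g_ell l) (\<lambda>x. \<mu> *\<^sub>R sigma_b b l x) \<tau>0 (g_ell (r *\<^sub>R l)) (\<lambda>x. 0)"
      unfolding cmc_generates_def
      by (rule exI[of _ "\<lambda>x. c"]) (use ls gb z in auto)
    show "\<forall>t0. slice_data (static_torus (r *\<^sub>R l)) t0 = (g_ell (r *\<^sub>R l), (\<lambda>x. 0))"
      by (simp add: slice_data_def static_torus_def vec_eq_iff fun_eq_iff)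
  qed
  show ?thesis using part1 part2 by blast
qed

end
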